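(* Let $\mathbb{D}$ be a discrete polymatroid on ground set $\{1,\dots,r\}$ with rank function $\rho$ and $\rho(\{1,\dots,r\})=k$, and let $\mathcal{I}_{\mathbb{D}}(Z,\mathcal{R})$ be the generalized index coding problem constructed from $\mathbb{D}$ (defined in the context). If a perfect linear index coding solution of dimension $n$ over $\mathbb{F}_2$ exists for $\mathcal{I}_{\mathbb{D}}(Z,\mathcal{R})$, then the discrete polymatroid $n\mathbb{D}$ is representable over $\mathbb{F}_2$.
   Context: A discrete polymatroid on $\{1,\dots,r\}$ with rank function $\rho:2^{\{1,\dots,r\}}\to\mathbb{Z}_{\ge0}$ (monotone, submodular, $\rho(\emptyset)=0$) is the set $\mathbb{D}=\{u\in\mathbb{Z}_{\ge0}^r: \sum_{i\in A}u_i\le\rho(A)\ \forall A\subseteq\{1,\dots,r\}\}$. For $u,v\in\mathbb{Z}_{\ge0}^r$, $u\le v$ means componentwise and $u<v$ means $u\le v$, $u\ne v$; $(u)_{>0}$ is the set of indices of nonzero components. A basis vector of $\mathbb{D}$ is $u\in\mathbb{D}$ with no $v\in\mathbb{D}$, $u<v$; $\mathcal{B}(\mathbb{D})$ is the set of basis vectors. An excluded vector is $u\in\mathbb{Z}_{\ge0}^r$ with $u_i\le\rho(\{i\})$ for all $i$ and $u\notin\mathbb{D}$; it is minimal if no excluded $v$ satisfies $v<u$; $\mathcal{C}(\mathbb{D})$ is the set of minimal excluded vectors. $n\mathbb{D}$ is the discrete polymatroid on $\{1,\dots,r\}$ with rank function $n\rho$. It is representable over $\mathbb{F}_2$ if there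 are subspaces $V_1,\dots,V_r$ of an $\mathbb{F}_2$-vector space with $\dim(\sum_{i\in S}V_i)=n\rho(S)$ for all $S$. Construction of $\mathcal{I}_{\mathbb{D}}(Z,\mathcal{R})$: messages $Z=X\cup Y$ with $X=\{x_1,\dots,x_k\}$ and $Y=\{y_i^j: i\in\{1,\dots,r\}, j\in\{1,\dots,\rho(\{i\})\}\}$; with dimension $n$ each message lies in $\mathbb{F}_2^n$. Let $\zeta_i=\{y_i^1,\dots,y_i^{\rho(\{i\})}\}$. A receiver is a pair (demanded message, Has-set); a Has-set that is a set of messages means the receiver knows those messages, and a Has-set that is a sum $\sum_{y\in\Gamma}y$ means the receiver knows only the vector $\sum_{y\in\Gamma}y\in\mathbb{F}_2^n$. $\mathcal{R}=R_1\cup R_2\cup R_3$ where: $R_1=\bigcup_{b\in\mathcal{B}(\mathbb{D})}S_1(b)$ with $S_1(b)=\{(x_j,\bigcup_{l\in(b)_{>0}}\eta_l): j\in\{1,\dots,k\},\ \eta_l\subseteq\zeta_l,\ |\eta_l|=b_l\}$; $R_2=\bigcup_{c\in\mathcal{C}(\mathbb{D})}\bigcup_{j\in(c)_{>0}}\bigcup_{p\in\{1,\dots,\rho(\{j\})\}}S_2(c,j,p)$ with $S_2(c,j,p)=\{(y_j^p,\sum_{y\in\Gamma_1\cup\Gamma_2}y): \Gamma_1=\bigcup_{l\in(c)_{>0}\setminus\{j\}}\eta_l,\ \eta_l\subseteq\zeta_l,\ |\eta_l|=c_l,\ \Gamma_2\subseteq\zeta_j\setminus\{y_j^p\},\ |\Gamma_2|=c_j-1\}$;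 $R_3=\{(y_i^j,X): i\in\{1,\dots,r\}, j\in\{1,\dots,\rho(\{i\})\}\}$. An index code of length $l$ and dimension $n$ over $\mathbb{F}_2$ is a map $f$ from the concatenated messages in $\mathbb{F}_2^{n|Z|}$ to $\mathbb{F}_2^l$ such that each receiver can compute its demanded message from its Has-set and $f$ of the messages; it is linear if $f$ is linear. With $\mu$ the maximum number of receivers having the same Has-set, a solution is perfect if $l/n=\mu$. *)

theory Defs
  imports Complex_Main "HOL-Library.Z2" "HOL-Library.Function_Algebras"
begin

text \<open>Vectors in Z_{>=0}^r are functions nat => nat vanishing outside {1..r}.\<close>

definition nvecs :: "nat \<Rightarrow> (nat \<Rightarrow> nat) set" where
  "nvecs r = {u. \<forall>i. i \<notin> {1..r} \<longrightarrow> u i = 0}"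

definition is_rank_function :: "nat \<Rightarrow> (nat set \<Rightarrow> nat) \<Rightarrow> bool" where
  "is_rank_function r \<rho> \<longleftrightarrow>
     \<rho> {} = 0 \<and>
     (\<forall>A B. A \<subseteq> B \<and> B \<subseteq> {1..r} \<longrightarrow> \<rho> A \<le> \<rho> B) \<and>
     (\<forall>A B. A \<subseteq> {1..r} \<and> B \<subseteq> {1..r} \<longrightarrow> \<rho> (A \<union> B) + \<rho> (A \<inter> B) \<le> \<rho> A + \<rho> B)"

definition dpolymatroid :: "nat \<Rightarrow> (nat set \<Rightarrow> nat) \<Rightarrow> (nat \<Rightarrow> nat) set" where
  "dpolymatroid r \<rho> = {u \<in> nvecs r. \<forall>A. A \<subseteq> {1..r} \<longrightarrow> (\<Sum>i\<in>A. u i) \<le> \<rho> A}"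

definition supp :: "nat \<Rightarrow> (nat \<Rightarrow> nat) \<Rightarrow> nat set" where
  "supp r u = {i \<in> {1..r}. u i > 0}"

definition basis_vectors :: "nat \<Rightarrow> (nat set \<Rightarrow> nat) \<Rightarrow> (nat \<Rightarrow> nat) set" where
  "basis_vectors r \<rho> = {u \<in> dpolymatroid r \<rho>. \<not> (\<exists>v \<in> dpolymatroid r \<rho>. u \<le> v \<and> u \<noteq> v)}"

definition excluded_vectors :: "nat \<Rightarrow> (nat set \<Rightarrow> nat) \<Rightarrow> (nat \<Rightarrow> nat) set" where
  "excluded_vectors r \<rho> = {u \<in> nvecs r. (\<forall>i \<in> {1..r}. u i \<le> \<rho> {i}) \<and> u \<notin> dpolymatroid r \<rho>}"

definition min_excluded_vectors :: "nat \<Rightarrow> (nat set \<Rightarrow> nat) \<Rightarrow> (nat \<Rightarrow> nat) set" where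
  "min_excluded_vectors r \<rho> =
     {u \<in> excluded_vectors r \<rho>. \<not> (\<exists>v \<in> excluded_vectors r \<rho>. v \<le> u \<and> v \<noteq> u)}"

definition bvecs :: "nat \<Rightarrow> (nat \<Rightarrow> bit) set" where
  "bvecs N = {v. \<forall>t. t \<ge> N \<longrightarrow> v t = 0}"

definition bscale :: "bit \<Rightarrow> (nat \<Rightarrow> bit) \<Rightarrow> (nat \<Rightarrow> bit)" where
  "bscale c v = (\<lambda>t. c * v t)"

interpretation fv: vector_space bscale
  by unfold_locales (auto simp: bscale_def fun_eq_iff algebra_simps)

text \<open>The dimension of the sum of
  subspaces is the dimension of the span of their union.\<close>

definition representable_F2 :: "nat \<Rightarrow> (nat set \<Rightarrow> nat) \<Rightarrow> bool" where
  "representable_F2 r \<rho>' \<longleftrightarrow>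
     (\<exists>N (V :: nat \<Rightarrow> (nat \<Rightarrow> bit) set).
        (\<forall>i \<in> {1..r}. fv.subspace (V i) \<and> V i \<subseteq> bvecs N) \<and>
        (\<forall>S. S \<subseteq> {1..r} \<longrightarrow> fv.dim (\<Union>i\<in>S. V i) = \<rho>' S))"

datatype msg = Xmsg nat | Ymsg nat nat

datatype hasset = Knows "msg set" | KnowsSum "msg set"

type_synonym receiver = "msg \<times> hasset"

definition Xset :: "nat \<Rightarrow> msg set" where
  "Xset k = {Xmsg j | j. j \<in> {1..k}}"

definition zeta :: "(nat set \<Rightarrow> nat) \<Rightarrow> nat \<Rightarrow> msg set" where
  "zeta \<rho> i = {Ymsg i j | j. j \<in> {1..\<rho> {i}}}"

definition Yset :: "nat \<Rightarrow> (nat set \<Rightarrow> nat) \<Rightarrow> msg set" where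
  "Yset r \<rho> = (\<Union>i\<in>{1..r}. zeta \<rho> i)"

definition Zset :: "nat \<Rightarrow> (nat set \<Rightarrow> nat) \<Rightarrow> msg set" where
  "Zset r \<rho> = Xset (\<rho> {1..r}) \<union> Yset r \<rho>"

definition S1 :: "nat \<Rightarrow> (nat set \<Rightarrow> nat) \<Rightarrow> (nat \<Rightarrow> nat) \<Rightarrow> receiver set" where
  "S1 r \<rho> b = {(Xmsg j, Knows (\<Union>l\<in>supp r b. \<eta> l)) | j \<eta>.
      j \<in> {1..\<rho> {1..r}} \<and> (\<forall>l \<in> supp r b. \<eta> l \<subseteq> zeta \<rho> l \<and> card (\<eta> l) = b l)}"

definition R1 :: "nat \<Rightarrow> (nat set \<Rightarrow> nat) \<Rightarrow> receiver set" where
  "R1 r \<rho> = (\<Union>b \<in> basis_vectors r \<rho>. S1 r \<rho> b)"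

definition S2 :: "nat \<Rightarrow> (nat set \<Rightarrow> nat) \<Rightarrow> (nat \<Rightarrow> nat) \<Rightarrow> nat \<Rightarrow> nat \<Rightarrow> receiver set" where
  "S2 r \<rho> c j p = {(Ymsg j p, KnowsSum ((\<Union>l\<in>supp r c - {j}. \<eta> l) \<union> \<Gamma>2)) | \<eta> \<Gamma>2.
      (\<forall>l \<in> supp r c - {j}. \<eta> l \<subseteq> zeta \<rho> l \<and> card (\<eta> l) = c l) \<and>
      \<Gamma>2 \<subseteq> zeta \<rho> j - {Ymsg j p} \<and> card \<Gamma>2 = c j - 1}"

definition R2 :: "nat \<Rightarrow> (nat set \<Rightarrow> nat) \<Rightarrow> receiver set" where
  "R2 r \<rho> = (\<Union>c \<in> min_excluded_vectors r \<rho>. \<Union>j \<in> supp r c. \<Union>p \<in> {1..\<rho> {j}}. S2 r \<rho> c j p)"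

definition R3 :: "nat \<Rightarrow> (nat set \<Rightarrow> nat) \<Rightarrow> receiver set" where
  "R3 r \<rho> = {(Ymsg i j, Knows (Xset (\<rho> {1..r}))) | i j. i \<in> {1..r} \<and> j \<in> {1..\<rho> {i}}}"

definition Rset :: "nat \<Rightarrow> (nat set \<Rightarrow> nat) \<Rightarrow> receiver set" where
  "Rset r \<rho> = R1 r \<rho> \<union> R2 r \<rho> \<union> R3 r \<rho>"

definition mu :: "receiver set \<Rightarrow> nat" where
  "mu R = Max {card {q \<in> R. snd q = h} | h. h \<in> snd ` R}"

text \<open>A message assignment of dimension n: each message of Z gets a vector in F_2^n
  (messages outside Z are 0); these are exactly the elements of F_2^{n|Z|}.\<close>

definition assignments :: "nat \<Rightarrow> msg set \<Rightarrow> (msg \<Rightarrow> nat \<Rightarrow> bit) set" where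
  "assignments n Z = {m. (\<forall>z \<in> Z. m z \<in> bvecs n) \<and> (\<forall>z. z \<notin> Z \<longrightarrow> m z = 0)}"

fun side_info :: "hasset \<Rightarrow> (msg \<Rightarrow> nat \<Rightarrow> bit) \<Rightarrow> (msg \<Rightarrow> nat \<Rightarrow> bit)" where
  "side_info (Knows S) m = (\<lambda>z. if z \<in> S then m z else 0)"
| "side_info (KnowsSum \<Gamma>) m = (\<lambda>_. \<Sum>y\<in>\<Gamma>. m y)"

definition is_index_code ::
  "nat \<Rightarrow> msg set \<Rightarrow> receiver set \<Rightarrow> nat \<Rightarrow> ((msg \<Rightarrow> nat \<Rightarrow> bit) \<Rightarrow> (nat \<Rightarrow> bit)) \<Rightarrow> bool" where
  "is_index_code n Z R l f \<longleftrightarrow>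
     (\<forall>m \<in> assignments n Z. f m \<in> bvecs l) \<and>
     (\<forall>(d, h) \<in> R. \<exists>g. \<forall>m \<in> assignments n Z. g (side_info h m) (f m) = m d)"

definition is_linear_code :: "nat \<Rightarrow> msg set \<Rightarrow> ((msg \<Rightarrow> nat \<Rightarrow> bit) \<Rightarrow> (nat \<Rightarrow> bit)) \<Rightarrow> bool" where
  "is_linear_code n Z f \<longleftrightarrow>
     (\<forall>m1 \<in> assignments n Z. \<forall>m2 \<in> assignments n Z. f (m1 + m2) = f m1 + f m2) \<and>
     (\<forall>c. \<forall>m \<in> assignments n Z. f (\<lambda>z. bscale c (m z)) = bscale c (f m))"

definition has_perfect_linear_solution :: "nat \<Rightarrow> msg set \<Rightarrow> receiver set \<Rightarrow> bool" where
  "has_perfect_linear_solution n Z R \<longleftrightarrow>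
     (\<exists>l f. is_index_code n Z R l f \<and> is_linear_code n Z f \<and>
            real l / real n = real (mu R))"

end

theory Submission
  imports Defs
begin

lemma rank_mono: "is_rank_function r \<rho> \<Longrightarrow> A \<subseteq> B \<Longrightarrow> B \<subseteq> {1..r} \<Longrightarrow> \<rho> A \<le> \<rho> B"
  unfolding is_rank_function_def by blast

lemma rank_submod: "is_rank_function r \<rho> \<Longrightarrow> A \<subseteq> {1..r} \<Longrightarrow> B \<subseteq> {1..r} \<Longrightarrow>
   \<rho> (A \<union> B) + \<rho> (A \<inter> B) \<le> \<rho> A + \<rho> B"
  unfolding is_rank_function_def by blast

lemma rank_empty: "is_rank_function r \<rho> \<Longrightarrow> \<rho> {} = 0"
  unfolding is_rank_function_def by blast

lemma dpI: "u \<in> nvecs r \<Longrightarrow> (\<And>A. A \<subseteq> {1..r} \<Longrightarrow> (\<Sum>i\<in>A. u i) \<le> \<rho> A) \<Longrightarrow> u \<in> dpolymatroid r \<rho>"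
  unfolding dpolymatroid_def by blast

lemma dpD: "u \<in> dpolymatroid r \<rho> \<Longrightarrow> A \<subseteq> {1..r} \<Longrightarrow> (\<Sum>i\<in>A. u i) \<le> \<rho> A"
  unfolding dpolymatroid_def by blast

lemma dp_nvecs: "u \<in> dpolymatroid r \<rho> \<Longrightarrow> u \<in> nvecs r"
  unfolding dpolymatroid_def by blast

lemma nvecsD: "u \<in> nvecs r \<Longrightarrow> i \<notin> {1..r} \<Longrightarrow> u i = 0"
  unfolding nvecs_def by blast

lemma greedy_step:
  assumes R: "is_rank_function r \<rho>" and u: "u \<in> dpolymatroid r \<rho>"
    and sup: "\<And>i. i \<notin> P \<Longrightarrow> u i = 0" and P: "P \<subseteq> {1..r}"
    and sm: "(\<Sum>i\<in>P. u i) = \<rho> P" and x: "x \<in> {1..r}" "x \<notin> P"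
  shows "u(x := \<rho> (insert x P) - \<rho> P) \<in> dpolymatroid r \<rho>"
    "(\<Sum>i\<in>insert x P. (u(x := \<rho> (insert x P) - \<rho> P)) i) = \<rho> (insert x P)"
proof -
  define u' where "u' = u(x := \<rho> (insert x P) - \<rho> P)"
  have finP: "finite P" using P finite_subset by blast
  have mono1: "\<rho> P \<le> \<rho> (insert x P)" using rank_mono[OF R, of P "insert x P"] P x by auto
  show "u' \<in> dpolymatroid r \<rho>"
  proof (rule dpI)
    show "u' \<in> nvecs r" using dp_nvecs[OF u] x unfolding nvecs_def u'_def by auto
  next
    fix A assume A: "A \<subseteq> {1..r}"
    have finA: "finite A" using A finite_subset by blast
    show "(\<Sum>i\<in>A. u' i) \<le> \<rho> A"
    proof (cases "x \<in> A")
      case False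
      then have "(\<Sum>i\<in>A. u' i) = (\<Sum>i\<in>A. u i)" unfolding u'_def by (intro sum.cong) auto
      then show ?thesis using dpD[OF u A] by simp
    next
      case True
      have e1: "(\<Sum>i\<in>A. u' i) = u' x + (\<Sum>i\<in>A - {x}. u' i)"
        using True finA by (simp add: sum.remove)
      have e2: "(\<Sum>i\<in>A - {x}. u' i) = (\<Sum>i\<in>A - {x}. u i)" unfolding u'_def by (intro sum.cong) auto
      have e3: "(\<Sum>i\<in>A - {x}. u i) = (\<Sum>i\<in>A \<inter> P. u i)"
        using finA x sup by (intro sum.mono_neutral_cong_right) auto
      have AP: "A \<inter> P \<subseteq> {1..r}" using A by auto
      have le1: "(\<Sum>i\<in>A \<inter> P. u i) \<le> \<rho> (A \<inter> P)" using dpD[OF u AP] .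
      have sub: "\<rho> (insert x (A \<inter> P) \<union> P) + \<rho> (insert x (A \<inter> P) \<inter> P) \<le> \<rho> (insert x (A \<inter> P)) + \<rho> P"
        using rank_submod[OF R, of "insert x (A \<inter> P)" P] A P x True by auto
      have s1: "insert x (A \<inter> P) \<union> P = insert x P" by auto
      have s2: "insert x (A \<inter> P) \<inter> P = A \<inter> P" using x by auto
      have mono2: "\<rho> (insert x (A \<inter> P)) \<le> \<rho> A" using rank_mono[OF R, of "insert x (A \<inter> P)" A] A True by auto
      have "u' x = \<rho> (insert x P) - \<rho> P" unfolding u'_def by simp
      then show ?thesis using e1 e2 e3 le1 sub s1 s2 mono1 mono2 by simp
    qed
  qed
  have "(\<Sum>i\<in>insert x P. u' i) = u' x + (\<Sum>i\<in>P. u' i)" using finP x by simp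
  also have "(\<Sum>i\<in>P. u' i) = (\<Sum>i\<in>P. u i)" unfolding u'_def using x by (intro sum.cong) auto
  finally show "(\<Sum>i\<in>insert x P. u' i) = \<rho> (insert x P)" using sm mono1 unfolding u'_def by simp
qed

lemma greedy_extend:
  assumes R: "is_rank_function r \<rho>" and finQ: "finite Q"
  shows "u \<in> dpolymatroid r \<rho> \<Longrightarrow> (\<And>i. i \<notin> P \<Longrightarrow> u i = 0) \<Longrightarrow> P \<union> Q \<subseteq> {1..r} \<Longrightarrow> P \<inter> Q = {}
    \<Longrightarrow> (\<Sum>i\<in>P. u i) = \<rho> P \<Longrightarrow>
    \<exists>u'. u' \<in> dpolymatroid r \<rho> \<and> (\<forall>i. i \<notin> P \<union> Q \<longrightarrow> u' i = 0) \<and> (\<forall>i\<in>P. u' i = u i)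
       \<and> (\<Sum>i\<in>P \<union> Q. u' i) = \<rho> (P \<union> Q)"
  using finQ
proof (induction Q)
  case empty
  then show ?case by auto
next
  case (insert x Q)
  obtain u1 where u1: "u1 \<in> dpolymatroid r \<rho>" "\<forall>i. i \<notin> P \<union> Q \<longrightarrow> u1 i = 0" "\<forall>i\<in>P. u1 i = u i"
     "(\<Sum>i\<in>P \<union> Q. u1 i) = \<rho> (P \<union> Q)"
    using insert by auto
  have x: "x \<in> {1..r}" "x \<notin> P \<union> Q" using insert by auto
  note st = greedy_step[OF R u1(1) _ _ u1(4) x(1) x(2)]
  have PQ: "P \<union> Q \<subseteq> {1..r}" using insert by auto
  let ?u = "u1(x := \<rho> (insert x (P \<union> Q)) - \<rho> (P \<union> Q))"
  have "?u \<in> dpolymatroid r \<rho>" using st(1) u1(2) PQ by blast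
  moreover have "\<forall>i. i \<notin> P \<union> insert x Q \<longrightarrow> ?u i = 0" using u1(2) by auto
  moreover have "\<forall>i\<in>P. ?u i = u i" using u1(3) x by auto
  moreover have "(\<Sum>i\<in>P \<union> insert x Q. ?u i) = \<rho> (P \<union> insert x Q)" using st(2) u1(2) PQ by simp
  ultimately show ?case by blast
qed

lemma greedy:
  assumes R: "is_rank_function r \<rho>" and S: "S \<subseteq> {1..r}"
  shows "\<exists>b \<in> dpolymatroid r \<rho>. (\<Sum>i\<in>S. b i) = \<rho> S \<and> (\<Sum>i\<in>{1..r}. b i) = \<rho> {1..r}"
proof -
  have z: "(\<lambda>_. 0::nat) \<in> dpolymatroid r \<rho>" unfolding dpolymatroid_def nvecs_def by auto
  obtain u where u: "u \<in> dpolymatroid r \<rho>" "\<forall>i. i \<notin> {} \<union> S \<longrightarrow> u i = 0" "(\<Sum>i\<in>{} \<union> S. u i) = \<rho> ({} \<union> S)"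
    using greedy_extend[OF R, of S "\<lambda>_. 0" "{}"] z S finite_subset[OF S] rank_empty[OF R] by auto
  obtain b where b: "b \<in> dpolymatroid r \<rho>" "\<forall>i\<in>S. b i = u i" "(\<Sum>i\<in>S \<union> ({1..r} - S). b i) = \<rho> (S \<union> ({1..r} - S))"
    using greedy_extend[OF R, of "{1..r} - S" u S] u S by auto
  have "S \<union> ({1..r} - S) = {1..r}" using S by auto
  then show ?thesis using b u by (intro bexI[of _ b]) auto
qed

lemma dp_le_single: "is_rank_function r \<rho> \<Longrightarrow> b \<in> dpolymatroid r \<rho> \<Longrightarrow> i \<in> {1..r} \<Longrightarrow> b i \<le> \<rho> {i}"
  using dpD[of b r \<rho> "{i}"] by auto

lemma basis_of_sum:
  assumes b: "b \<in> dpolymatroid r \<rho>" and s: "(\<Sum>i\<in>{1..r}. b i) = \<rho> {1..r}"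
  shows "b \<in> basis_vectors r \<rho>"
proof -
  { fix v assume v: "v \<in> dpolymatroid r \<rho>" "b \<le> v" "b \<noteq> v"
    then obtain i where i: "b i \<noteq> v i" by (auto simp: fun_eq_iff)
    have ir: "i \<in> {1..r}" using i dp_nvecs[OF b] dp_nvecs[OF v(1)] nvecsD by metis
    have "(\<Sum>i\<in>{1..r}. b i) < (\<Sum>i\<in>{1..r}. v i)"
      using v(2) i ir by (intro sum_strict_mono_ex1) (auto simp: le_fun_def order.strict_iff_order)
    moreover have "(\<Sum>i\<in>{1..r}. v i) \<le> \<rho> {1..r}" using dpD[OF v(1)] by auto
    ultimately have False using s by simp }
  then show ?thesis unfolding basis_vectors_def using b by auto
qed

lemma dp_down:
  assumes u: "u \<in> dpolymatroid r \<rho>" and c: "c \<in> nvecs r" and le: "\<And>i. i \<in> {1..r} \<Longrightarrow> c i \<le> u i"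
  shows "c \<in> dpolymatroid r \<rho>"
proof (rule dpI[OF c])
  fix A assume A: "A \<subseteq> {1..r}"
  have "(\<Sum>i\<in>A. c i) \<le> (\<Sum>i\<in>A. u i)" using le A by (intro sum_mono) auto
  then show "(\<Sum>i\<in>A. c i) \<le> \<rho> A" using dpD[OF u A] by simp
qed

lemma min_excluded_below:
  "w \<in> excluded_vectors r \<rho> \<Longrightarrow> \<exists>c \<in> min_excluded_vectors r \<rho>. c \<le> w"
proof (induction "\<Sum>i\<in>{1..r}. w i" arbitrary: w rule: less_induct)
  case less
  show ?case
  proof (cases "w \<in> min_excluded_vectors r \<rho>")
    case True then show ?thesis by auto
  next
    case False
    then obtain v where v: "v \<in> excluded_vectors r \<rho>" "v \<le> w" "v \<noteq> w"
      using less.prems unfolding min_excluded_vectors_def by auto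
    then obtain i where i: "v i \<noteq> w i" by (auto simp: fun_eq_iff)
    have nv: "v \<in> nvecs r" "w \<in> nvecs r" using v(1) less.prems unfolding excluded_vectors_def by auto
    have ir: "i \<in> {1..r}" using i nv nvecsD by metis
    have "(\<Sum>i\<in>{1..r}. v i) < (\<Sum>i\<in>{1..r}. w i)"
      using v(2) i ir by (intro sum_strict_mono_ex1) (auto simp: le_fun_def order.strict_iff_order)
    from less.hyps[OF this v(1)] obtain c where "c \<in> min_excluded_vectors r \<rho>" "c \<le> v" by auto
    then show ?thesis using v(2) order_trans by blast
  qed
qed

lemma bit_add_self[simp]: "(a::bit) + a = 0"
  by (cases a) auto

lemma fun_add_self[simp]: "(x::'a \<Rightarrow> bit) + x = 0"
  by (auto simp: fun_eq_iff)

lemma fun2_add_self[simp]: "(x::'a \<Rightarrow> 'b \<Rightarrow> bit) + x = 0"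
  by (auto simp: fun_eq_iff)

lemma bit_cases2: "(a::bit) = 0 \<or> a = 1" by (cases a) auto

locale pairing =
  fixes Dp :: "(nat \<Rightarrow> bit) \<Rightarrow> 'm::plus \<Rightarrow> bit" and Ks :: "'m set" and U :: "(nat \<Rightarrow> bit) set"
  assumes addw: "\<And>a b m. m \<in> Ks \<Longrightarrow> Dp (a + b) m = Dp a m + Dp b m"
    and scalew: "\<And>c a m. m \<in> Ks \<Longrightarrow> Dp (bscale c a) m = c * Dp a m"
    and addm_in: "\<And>m1 m2. m1 \<in> Ks \<Longrightarrow> m2 \<in> Ks \<Longrightarrow> m1 + m2 \<in> Ks"
    and addm: "\<And>a m1 m2. m1 \<in> Ks \<Longrightarrow> m2 \<in> Ks \<Longrightarrow> Dp a (m1 + m2) = Dp a m1 + Dp a m2"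
    and U: "fv.subspace U"
    and nondeg: "\<And>w. w \<in> U \<Longrightarrow> w \<noteq> 0 \<Longrightarrow> \<exists>m\<in>Ks. Dp w m \<noteq> 0"
begin

lemma Dp_zero: "m \<in> Ks \<Longrightarrow> Dp 0 m = 0"
proof -
  assume m: "m \<in> Ks"
  have "Dp (0 + 0) m = Dp 0 m + Dp 0 m" using addw[OF m] .
  then show ?thesis by simp
qed

lemma Dp_span: "m \<in> Ks \<Longrightarrow> (\<forall>\<phi>\<in>\<Phi>. Dp \<phi> m = 0) \<Longrightarrow> w \<in> fv.span \<Phi> \<Longrightarrow> Dp w m = 0"
proof -
  assume m: "m \<in> Ks" and v: "\<forall>\<phi>\<in>\<Phi>. Dp \<phi> m = 0" and w: "w \<in> fv.span \<Phi>"
  show ?thesis using w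
  proof (induction rule: fv.span_induct_alt)
    fix c x y assume "x \<in> \<Phi>" "Dp y m = 0"
    then show "Dp (bscale c x + y) m = 0" unfolding addw[OF m] scalew[OF m] using v by simp
  qed (rule Dp_zero[OF m])
qed

lemma sep: "finite \<Phi> \<Longrightarrow> \<Phi> \<subseteq> U \<Longrightarrow> \<psi> \<in> U \<Longrightarrow> \<psi> \<notin> fv.span \<Phi> \<Longrightarrow>
   \<exists>m\<in>Ks. (\<forall>\<phi>\<in>\<Phi>. Dp \<phi> m = 0) \<and> Dp \<psi> m = 1"
proof (induction \<Phi> arbitrary: \<psi> rule: finite_induct)
  case empty
  then have "\<psi> \<noteq> 0" using fv.span_zero by auto
  then obtain m where "m \<in> Ks" "Dp \<psi> m \<noteq> 0" using nondeg empty by blast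
  then show ?case by auto
next
  case (insert \<phi> \<Phi>)
  have ns1: "\<psi> \<notin> fv.span \<Phi>" using insert.prems fv.span_mono[of \<Phi> "insert \<phi> \<Phi>"] by auto
  obtain m1 where m1: "m1 \<in> Ks" "\<forall>\<phi>\<in>\<Phi>. Dp \<phi> m1 = 0" "Dp \<psi> m1 = 1"
    using insert.IH[OF _ _ ns1] insert.prems by auto
  show ?case
  proof (cases "Dp \<phi> m1 = 0")
    case True then show ?thesis using m1 by auto
  next
    case False
    then have f1: "Dp \<phi> m1 = 1" using bit_cases2 by auto
    have ns2: "\<psi> + \<phi> \<notin> fv.span \<Phi>"
    proof
      assume "\<psi> + \<phi> \<in> fv.span \<Phi>"
      then have a: "\<psi> + \<phi> \<in> fv.span (insert \<phi> \<Phi>)" using fv.span_mono[of \<Phi> "insert \<phi> \<Phi>"] by auto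
      have b: "\<phi> \<in> fv.span (insert \<phi> \<Phi>)" by (simp add: fv.span_base)
      have "(\<psi> + \<phi>) + \<phi> \<in> fv.span (insert \<phi> \<Phi>)" using fv.span_add[OF a b] .
      moreover have "(\<psi> + \<phi>) + \<phi> = \<psi>" by (simp add: add.assoc)
      ultimately show False using insert.prems by simp
    qed
    have inU: "\<psi> + \<phi> \<in> U" using U insert.prems unfolding fv.subspace_def by auto
    have PU: "\<Phi> \<subseteq> U" using insert.prems(1) by blast
    from insert.IH[OF PU inU ns2] obtain m3 where m3: "m3 \<in> Ks" "\<forall>\<phi>\<in>\<Phi>. Dp \<phi> m3 = 0" "Dp (\<psi> + \<phi>) m3 = 1"
      by blast
    have s3: "Dp \<psi> m3 + Dp \<phi> m3 = 1" using m3(3) addw[OF m3(1)] by metis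
    show ?thesis
    proof (cases "Dp \<phi> m3 = 0")
      case True then show ?thesis using m3 s3 by (intro bexI[of _ m3]) auto
    next
      case False
      then have f3: "Dp \<phi> m3 = 1" using bit_cases2 by auto
      then have p3: "Dp \<psi> m3 = 0" using s3 by (cases "Dp \<psi> m3") auto
      show ?thesis
        using m1 m3 f1 f3 p3 addm addm_in by (intro bexI[of _ "m1 + m3"]) auto
    qed
  qed
qed

lemma dual_span:
  assumes "finite \<Phi>" "\<Phi> \<subseteq> U" "\<psi> \<in> U"
    and h: "\<And>m. m \<in> Ks \<Longrightarrow> (\<forall>\<phi>\<in>\<Phi>. Dp \<phi> m = 0) \<Longrightarrow> Dp \<psi> m = 0"
  shows "\<psi> \<in> fv.span \<Phi>"
proof (rule ccontr)
  assume "\<psi> \<notin> fv.span \<Phi>"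
  from sep[OF assms(1-3) this] obtain m where "m \<in> Ks" "\<forall>\<phi>\<in>\<Phi>. Dp \<phi> m = 0" "Dp \<psi> m = 1" by blast
  with h show False by fastforce
qed

end


lemma indep_of_spanning:
  assumes fB: "finite B" and iE: "fv.independent E" and EB: "E \<subseteq> fv.span B" and c: "card B \<le> card E"
  shows "fv.independent B \<and> card B = card E"
proof -
  have cE: "card E \<le> card B" using fv.independent_span_bound[OF fB iE EB] by simp
  have "fv.independent B"
  proof
    assume "fv.dependent B"
    then obtain a where a: "a \<in> B" "a \<in> fv.span (B - {a})" by (meson fv.dependent_def)
    have "fv.span B \<subseteq> fv.span (B - {a})"
    proof -
      have "B \<subseteq> fv.span (B - {a})"
      proof
        fix b assume b: "b \<in> B"
        show "b \<in> fv.span (B - {a})"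
        proof (cases "b = a")
          case True then show ?thesis using a(2) by simp
        next
          case False then show ?thesis using b by (intro fv.span_base) simp
        qed
      qed
      then have "fv.span B \<subseteq> fv.span (fv.span (B - {a}))" by (rule fv.span_mono)
      then show ?thesis by (simp add: fv.span_span)
    qed
    then have "E \<subseteq> fv.span (B - {a})" using EB by auto
    then have "card E \<le> card (B - {a})" using fv.independent_span_bound[OF _ iE] fB by (meson finite_Diff)
    moreover have "card (B - {a}) < card B" by (rule card_Diff1_less[OF fB a(1)])
    ultimately show False using c by simp
  qed
  then show ?thesis using c cE by simp
qed

lemma dim_between: "A \<subseteq> B \<Longrightarrow> B \<subseteq> fv.span A \<Longrightarrow> fv.dim B = fv.dim A"
proof -
  assume 1: "A \<subseteq> B" and 2: "B \<subseteq> fv.span A"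
  have "fv.span A \<subseteq> fv.span B" using 1 by (rule fv.span_mono)
  moreover have "fv.span B \<subseteq> fv.span A" using fv.span_mono[OF 2] by (simp add: fv.span_span)
  ultimately have "fv.span A = fv.span B" by (rule antisym)
  then show ?thesis by (metis fv.span_eq_dim)
qed

declare add_bit_eq_xor[simp del] mult_bit_eq_and[simp del]

lemma sum_app: "(\<Sum>i\<in>I. F i) x = (\<Sum>i\<in>I. F i x)"
  by (induction I rule: infinite_finite_induct) auto

locale icode =
  fixes r n :: nat and \<rho> :: "nat set \<Rightarrow> nat" and l :: nat
    and f :: "(msg \<Rightarrow> nat \<Rightarrow> bit) \<Rightarrow> (nat \<Rightarrow> bit)"
  assumes R: "is_rank_function r \<rho>" and npos: "n > 0"
    and code: "is_index_code n (Zset r \<rho>) (Rset r \<rho>) l f"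
    and lin: "is_linear_code n (Zset r \<rho>) f"
    and leq: "real l / real n = real (mu (Rset r \<rho>))"
begin

abbreviation "k \<equiv> \<rho> {1..r}"
abbreviation "Z \<equiv> Zset r \<rho>"
abbreviation "Y \<equiv> Yset r \<rho>"
abbreviation "AS \<equiv> assignments n (Zset r \<rho>)"
abbreviation "RR \<equiv> Rset r \<rho>"
definition "KK = {m \<in> AS. f m = 0}"

lemma A_add: "m1 \<in> AS \<Longrightarrow> m2 \<in> AS \<Longrightarrow> m1 + m2 \<in> AS"
  unfolding assignments_def bvecs_def by auto

lemma A_zero: "0 \<in> AS"
  unfolding assignments_def bvecs_def by auto

lemma A_scale: "m \<in> AS \<Longrightarrow> (\<lambda>z. bscale c (m z)) \<in> AS"
  unfolding assignments_def bvecs_def bscale_def by auto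

lemma A_val: "m \<in> AS \<Longrightarrow> z \<notin> Z \<or> s \<ge> n \<Longrightarrow> m z s = 0"
  unfolding assignments_def bvecs_def by auto

lemma f_add: "m1 \<in> AS \<Longrightarrow> m2 \<in> AS \<Longrightarrow> f (m1 + m2) = f m1 + f m2"
  using lin unfolding is_linear_code_def by blast

lemma f_scale: "m \<in> AS \<Longrightarrow> f (\<lambda>z. bscale c (m z)) = bscale c (f m)"
  using lin unfolding is_linear_code_def by blast

lemma f_zero: "f 0 = 0"
proof -
  have "f (0 + 0) = f 0 + f 0" using f_add[OF A_zero A_zero] .
  then show ?thesis by simp
qed

lemma f_range: "m \<in> AS \<Longrightarrow> f m \<in> bvecs l"
  using code unfolding is_index_code_def by blast

lemma A_sum: "finite I \<Longrightarrow> (\<And>i. i \<in> I \<Longrightarrow> M i \<in> AS) \<Longrightarrow> (\<Sum>i\<in>I. M i) \<in> AS \<and> f (\<Sum>i\<in>I. M i) = (\<Sum>i\<in>I. f (M i))"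
proof (induction I rule: finite_induct)
  case empty then show ?case using A_zero f_zero unfolding sum.empty by blast
next
  case (insert x F)
  then have a: "(\<Sum>i\<in>F. M i) \<in> AS" "f (\<Sum>i\<in>F. M i) = (\<Sum>i\<in>F. f (M i))" "M x \<in> AS" by auto
  have e1: "(\<Sum>i\<in>insert x F. M i) = M x + (\<Sum>i\<in>F. M i)" using insert.hyps by (rule sum.insert)
  have e2: "(\<Sum>i\<in>insert x F. f (M i)) = f (M x) + (\<Sum>i\<in>F. f (M i))" using insert.hyps by (rule sum.insert)
  show ?case unfolding e1 e2 using A_add[OF a(3) a(1)] f_add[OF a(3) a(1)] a(2) by metis
qed

lemma side_info_zero: "side_info h 0 = 0"
  by (cases h) (auto simp: fun_eq_iff)

lemma decode: "(d, h) \<in> RR \<Longrightarrow> m \<in> KK \<Longrightarrow> side_info h m = 0 \<Longrightarrow> m d = 0"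
proof -
  assume dh: "(d, h) \<in> RR" and m: "m \<in> KK" and s: "side_info h m = 0"
  obtain g where g: "\<forall>m \<in> AS. g (side_info h m) (f m) = m d"
    using code dh unfolding is_index_code_def by blast
  have "g (side_info h m) (f m) = m d" using g m unfolding KK_def by blast
  moreover have "g (side_info h 0) (f 0) = (0::msg \<Rightarrow> nat \<Rightarrow> bit) d" using g A_zero by blast
  ultimately show ?thesis using m s side_info_zero f_zero unfolding KK_def by simp
qed

lemma KK_add: "m1 \<in> KK \<Longrightarrow> m2 \<in> KK \<Longrightarrow> m1 + m2 \<in> KK"
  unfolding KK_def using A_add f_add by auto

lemma KK_AS: "m \<in> KK \<Longrightarrow> m \<in> AS" unfolding KK_def by auto

lemma Xmsg_in_Z: "Xmsg j \<in> Z \<longleftrightarrow> j \<in> {1..k}"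
  unfolding Zset_def Xset_def Yset_def zeta_def by auto

lemma Ymsg_in_Y: "Ymsg i j \<in> Y \<longleftrightarrow> i \<in> {1..r} \<and> j \<in> {1..\<rho> {i}}"
  unfolding Yset_def zeta_def by auto

lemma Ymsg_in_Z: "Ymsg i j \<in> Z \<longleftrightarrow> i \<in> {1..r} \<and> j \<in> {1..\<rho> {i}}"
  unfolding Zset_def Xset_def Yset_def zeta_def by auto

lemma Y_in_Z: "y \<in> Y \<Longrightarrow> y \<in> Z"
  unfolding Zset_def by auto

lemma X_notin_Y: "Xmsg j \<notin> Y"
  unfolding Yset_def zeta_def by auto

lemma Y_Ymsg: "y \<in> Y \<Longrightarrow> \<exists>i j. y = Ymsg i j \<and> i \<in> {1..r} \<and> j \<in> {1..\<rho> {i}}"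
  unfolding Yset_def zeta_def by auto

lemma finite_Y: "finite Y"
  unfolding Yset_def zeta_def by auto

lemma zeta_sub_Y: "i \<in> {1..r} \<Longrightarrow> zeta \<rho> i \<subseteq> Y"
  unfolding Yset_def by auto

lemma R3_in: "y \<in> Y \<Longrightarrow> (y, Knows (Xset k)) \<in> RR"
  unfolding Rset_def R3_def Yset_def zeta_def by auto

lemma decode3: "m \<in> KK \<Longrightarrow> (\<And>j. m (Xmsg j) = 0) \<Longrightarrow> y \<in> Y \<Longrightarrow> m y = 0"
proof -
  assume m: "m \<in> KK" and x: "\<And>j. m (Xmsg j) = 0" and y: "y \<in> Y"
  have "side_info (Knows (Xset k)) m = 0"
    using x unfolding Xset_def by (auto simp: fun_eq_iff)
  then show ?thesis using decode[OF R3_in[OF y] m] by simp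
qed

end

definition eta :: "(nat \<Rightarrow> nat) \<Rightarrow> nat set \<Rightarrow> msg set" where
  "eta b S = (\<Union>l\<in>S. (\<lambda>q. Ymsg l q) ` {1..b l})"

lemma card_eta: "finite S \<Longrightarrow> card (eta b S) = (\<Sum>l\<in>S. b l)"
  unfolding eta_def
  by (subst card_UN_disjoint) (auto simp: card_image inj_on_def)

lemma eta_mono: "S \<subseteq> T \<Longrightarrow> eta b S \<subseteq> eta b T"
  unfolding eta_def by auto

lemma finite_eta: "finite S \<Longrightarrow> finite (eta b S)"
  unfolding eta_def by auto

definition uv :: "msg \<Rightarrow> nat \<Rightarrow> msg \<Rightarrow> nat \<Rightarrow> bit" where
  "uv z0 t0 = (\<lambda>z s. if z = z0 \<and> s = t0 then 1 else 0)"

definition ev :: "nat \<Rightarrow> nat \<Rightarrow> bit" where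
  "ev i = (\<lambda>t. if t = i then 1 else 0)"

lemma bvecs_span: "v \<in> bvecs N \<Longrightarrow> v \<in> fv.span (ev ` {..<N})"
proof -
  assume v: "v \<in> bvecs N"
  have "v = (\<Sum>i<N. bscale (v i) (ev i))"
  proof
    fix t
    have "(\<Sum>i<N. bscale (v i) (ev i)) t = (\<Sum>i<N. (if i = t then v t else 0))"
      unfolding sum_app bscale_def ev_def by (intro sum.cong) auto
    also have "\<dots> = (if t < N then v t else 0)" by simp
    also have "\<dots> = v t" using v unfolding bvecs_def by auto
    finally show "v t = (\<Sum>i<N. bscale (v i) (ev i)) t" by simp
  qed
  also have "\<dots> \<in> fv.span (ev ` {..<N})"
    by (intro fv.span_sum fv.span_scale fv.span_base) auto
  finally show ?thesis .
qed

context icode begin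

lemma eta_sub_Y: "S \<subseteq> {1..r} \<Longrightarrow> (\<And>l. l \<in> S \<Longrightarrow> b l \<le> \<rho> {l}) \<Longrightarrow> eta b S \<subseteq> Y"
  unfolding eta_def Yset_def zeta_def by fastforce

lemma k_le_Y: "k \<le> card Y"
proof -
  obtain b where b: "b \<in> dpolymatroid r \<rho>" "(\<Sum>i\<in>{1..r}. b i) = \<rho> {1..r}"
    using greedy[OF R, of "{1..r}"] by auto
  have "eta b {1..r} \<subseteq> Y" using eta_sub_Y dp_le_single[OF R b(1)] by blast
  then have "card (eta b {1..r}) \<le> card Y" using finite_Y by (rule card_mono[rotated])
  then show ?thesis using card_eta[of "{1..r}" b] b(2) by simp
qed

lemma card_X: "card (Xset k) = k"
proof -
  have "Xset k = Xmsg ` {1..k}" unfolding Xset_def by auto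
  moreover have "card (Xmsg ` {1..k}) = k" by (subst card_image) (auto simp: inj_on_def)
  ultimately show ?thesis by simp
qed

lemma R_cases: "q \<in> RR \<Longrightarrow> (\<exists>j A. q = (Xmsg j, Knows A) \<and> j \<in> {1..k} \<and> A \<subseteq> Y) \<or>
   (\<exists>y G. q = (y, KnowsSum G) \<and> y \<in> Y) \<or> (\<exists>y. q = (y, Knows (Xset k)) \<and> y \<in> Y)"
proof -
  assume q: "q \<in> RR"
  consider "q \<in> R1 r \<rho>" | "q \<in> R2 r \<rho>" | "q \<in> R3 r \<rho>" using q unfolding Rset_def by blast
  then show ?thesis
  proof cases
    case 1
    then obtain b j \<eta> where q: "q = (Xmsg j, Knows (\<Union>l\<in>supp r b. \<eta> l))" "j \<in> {1..k}"
      "\<forall>l \<in> supp r b. \<eta> l \<subseteq> zeta \<rho> l"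
      unfolding R1_def S1_def by blast
    have "(\<Union>l\<in>supp r b. \<eta> l) \<subseteq> Y" using q(3) zeta_sub_Y unfolding supp_def by blast
    then show ?thesis using q by blast
  next
    case 2
    then obtain c j p G where q: "q = (Ymsg j p, KnowsSum G)" "j \<in> supp r c" "p \<in> {1..\<rho> {j}}"
      unfolding R2_def S2_def by blast
    have "Ymsg j p \<in> Y" using q unfolding Ymsg_in_Y supp_def by auto
    then show ?thesis using q by blast
  next
    case 3
    then show ?thesis unfolding R3_def Ymsg_in_Y[symmetric] by blast
  qed
qed

lemma group_le: "card {q \<in> RR. snd q = h} \<le> card Y"
proof -
  define Q where "Q = {q \<in> RR. snd q = h}"
  have inj: "inj_on fst Q" unfolding Q_def inj_on_def by (auto simp: prod_eq_iff)
  have "fst ` Q \<subseteq> Xset k \<or> fst ` Q \<subseteq> Y"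
  proof (cases "\<exists>q0\<in>Q. \<exists>j A. q0 = (Xmsg j, Knows A) \<and> j \<in> {1..k} \<and> A \<subseteq> Y")
    case True
    then obtain j0 A0 where q0: "(Xmsg j0, Knows A0) \<in> Q" "j0 \<in> {1..k}" "A0 \<subseteq> Y" by blast
    have hh: "h = Knows A0" using q0 unfolding Q_def by auto
    have "fst q \<in> Xset k" if qQ: "q \<in> Q" for q
    proof -
      have qR: "q \<in> RR" "snd q = h" using qQ unfolding Q_def by auto
      from R_cases[OF qR(1)] show ?thesis
      proof (elim disjE exE conjE)
        fix j A assume "q = (Xmsg j, Knows A)" "j \<in> {1..k}"
        then show ?thesis unfolding Xset_def by auto
      next
        fix y G assume "q = (y, KnowsSum G)"
        then show ?thesis using qR hh by auto
      next
        fix y assume "q = (y, Knows (Xset k))"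
        then have "A0 = Xset k" using qR hh by auto
        then have "Xmsg j0 \<in> Y" using q0 unfolding Xset_def by auto
        then show ?thesis using X_notin_Y by blast
      qed
    qed
    then show ?thesis by blast
  next
    case False
    have "fst q \<in> Y" if qQ: "q \<in> Q" for q
    proof -
      have qR: "q \<in> RR" using qQ unfolding Q_def by auto
      from R_cases[OF qR] False qQ show ?thesis by auto
    qed
    then show ?thesis by blast
  qed
  moreover have "card (Xset k) \<le> card Y" using card_X k_le_Y by simp
  moreover have "finite (Xset k)" unfolding Xset_def by auto
  ultimately have "card (fst ` Q) \<le> card Y"
    using finite_Y by (meson card_mono order_trans)
  then show ?thesis using card_image[OF inj] unfolding Q_def by simp
qed

lemma mu_le: "Y \<noteq> {} \<Longrightarrow> mu RR \<le> card Y"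
proof -
  assume Y: "Y \<noteq> {}"
  define G where "G = {card {q \<in> RR. snd q = h} | h. h \<in> snd ` RR}"
  have G1: "G \<subseteq> {..card Y}" unfolding G_def using group_le by auto
  then have G2: "finite G" by (rule finite_subset) simp
  obtain y where "y \<in> Y" using Y by blast
  then have "(y, Knows (Xset k)) \<in> RR" by (rule R3_in)
  then have G3: "G \<noteq> {}" unfolding G_def by force
  have "Max G \<le> card Y" using G1 G2 G3 by (intro Max.boundedI) auto
  then show ?thesis unfolding mu_def G_def by simp
qed

lemma l_le: "Y \<noteq> {} \<Longrightarrow> l \<le> n * card Y"
proof -
  assume Y: "Y \<noteq> {}"
  have "real l = real n * real (mu RR)" using leq npos by (simp add: field_simps)
  then have "l = n * mu RR" by (metis of_nat_eq_iff of_nat_mult)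
  then show ?thesis using mu_le[OF Y] by simp
qed

end

context icode begin

abbreviation "PP \<equiv> Y \<times> {..<n}"
definition "FF p = f (uv (fst p) (snd p))"
definition "comb c = (\<Sum>p\<in>PP. (\<lambda>z. bscale (c p) (uv (fst p) (snd p) z)))"

lemma uv_AS: "z0 \<in> Z \<Longrightarrow> t0 < n \<Longrightarrow> uv z0 t0 \<in> AS"
  unfolding assignments_def bvecs_def uv_def by auto

lemma finite_PP: "finite PP" using finite_Y by simp

lemma comb_props: "comb c \<in> AS \<and> f (comb c) = (\<Sum>p\<in>PP. bscale (c p) (FF p))"
proof -
  have M: "\<And>p. p \<in> PP \<Longrightarrow> (\<lambda>z. bscale (c p) (uv (fst p) (snd p) z)) \<in> AS"
    using uv_AS Y_in_Z A_scale by auto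
  have "(\<Sum>p\<in>PP. f (\<lambda>z. bscale (c p) (uv (fst p) (snd p) z))) = (\<Sum>p\<in>PP. bscale (c p) (FF p))"
    unfolding FF_def using uv_AS Y_in_Z f_scale by (intro sum.cong) auto
  then show ?thesis using A_sum[OF finite_PP M] unfolding comb_def by simp
qed

lemma comb_val: "comb c z s = (if (z, s) \<in> PP then c (z, s) else 0)"
proof -
  have "comb c z s = (\<Sum>p\<in>PP. (if p = (z, s) then c p else 0))"
    unfolding comb_def sum_app bscale_def uv_def by (intro sum.cong) auto
  also have "\<dots> = (if (z, s) \<in> PP then c (z, s) else 0)"
    using finite_PP by (simp add: sum.delta')
  finally show ?thesis .
qed

lemma comb_zero: "(\<Sum>p\<in>PP. bscale (c p) (FF p)) = 0 \<Longrightarrow> p \<in> PP \<Longrightarrow> c p = 0"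
proof -
  assume s: "(\<Sum>p\<in>PP. bscale (c p) (FF p)) = 0" and p: "p \<in> PP"
  have K: "comb c \<in> KK" using comb_props s unfolding KK_def by simp
  have X: "\<And>j. comb c (Xmsg j) = 0" using X_notin_Y by (auto simp: fun_eq_iff comb_val)
  obtain y t where pp: "p = (y, t)" "y \<in> Y" using p by auto
  have "comb c y = 0" using decode3[OF K X pp(2)] .
  then have "comb c y t = 0" by simp
  then show ?thesis using comb_val[of c y t] p pp by simp
qed

lemma FF_inj: "inj_on FF PP"
proof
  fix p q assume p: "p \<in> PP" and q: "q \<in> PP" and e: "FF p = FF q"
  show "p = q"
  proof (rule ccontr)
    assume pq: "p \<noteq> q"
    define c where "c x = (if x \<in> {p, q} then (1::bit) else 0)" for x
    have "(\<Sum>x\<in>PP. bscale (c x) (FF x)) = (\<Sum>x\<in>PP. (if x \<in> {p, q} then FF x else 0))"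
      unfolding c_def bscale_def by (intro sum.cong) (auto simp: fun_eq_iff)
    also have "\<dots> = (\<Sum>x\<in>PP \<inter> {p, q}. FF x)" using finite_PP by (simp add: sum.inter_restrict)
    also have "PP \<inter> {p, q} = {p, q}" using p q by auto
    also have "(\<Sum>x\<in>{p, q}. FF x) = FF p + FF q" using pq by simp
    also have "\<dots> = 0" using e by simp
    finally have "c p = 0" using comb_zero p by blast
    then show False unfolding c_def by simp
  qed
qed

lemma FF_indep: "fv.independent (FF ` PP)"
proof (rule fv.independent_if_scalars_zero)
  show "finite (FF ` PP)" using finite_PP by simp
next
  fix g :: "(nat \<Rightarrow> bit) \<Rightarrow> bit" and x
  assume s: "(\<Sum>x\<in>FF ` PP. bscale (g x) x) = 0" and x: "x \<in> FF ` PP"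
  have "(\<Sum>x\<in>FF ` PP. bscale (g x) x) = (\<Sum>p\<in>PP. bscale (g (FF p)) (FF p))"
    using FF_inj by (rule sum.reindex[unfolded comp_def])
  then have "(\<Sum>p\<in>PP. bscale ((g \<circ> FF) p) (FF p)) = 0" using s by simp
  then have "\<And>p. p \<in> PP \<Longrightarrow> (g \<circ> FF) p = 0" using comb_zero by blast
  then show "g x = 0" using x by auto
qed

lemma FF_range: "FF ` PP \<subseteq> bvecs l"
  unfolding FF_def using f_range uv_AS Y_in_Z by auto

lemma bvecs_in_span_FF: "Y \<noteq> {} \<Longrightarrow> bvecs l \<subseteq> fv.span (FF ` PP)"
proof
  fix a assume Y: "Y \<noteq> {}" and a: "a \<in> bvecs l"
  show "a \<in> fv.span (FF ` PP)"
  proof (rule ccontr)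
    assume na: "a \<notin> fv.span (FF ` PP)"
    have aF: "a \<notin> FF ` PP"
    proof
      assume "a \<in> FF ` PP"
      then have "a \<in> fv.span (FF ` PP)" by (rule fv.span_base)
      then show False using na by contradiction
    qed
    have ind: "fv.independent (insert a (FF ` PP))"
      using FF_indep na aF by (simp add: fv.independent_insert)
    have sub0: "insert a (FF ` PP) \<subseteq> bvecs l" using a FF_range by (rule insert_subsetI)
    have sub1: "bvecs l \<subseteq> fv.span (ev ` {..<l})" using bvecs_span by (rule subsetI)
    have sub: "insert a (FF ` PP) \<subseteq> fv.span (ev ` {..<l})" using sub0 sub1 by (rule order_trans)
    have "card (insert a (FF ` PP)) \<le> card (ev ` {..<l})"
      using fv.independent_span_bound[OF _ ind sub] by simp
    also have "\<dots> \<le> l" using card_image_le[of "{..<l}" ev] by simp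
    also have "\<dots> \<le> n * card Y" using l_le[OF Y] .
    finally have c1: "card (insert a (FF ` PP)) \<le> n * card Y" .
    have "card (insert a (FF ` PP)) = card (FF ` PP) + 1" using aF finite_PP by simp
    also have "card (FF ` PP) = card PP" using card_image[OF FF_inj] .
    also have "card PP = card Y * n" by (simp add: card_cartesian_product)
    finally show False using c1 by simp
  qed
qed

lemma surjY: "Y \<noteq> {} \<Longrightarrow> w \<in> bvecs l \<Longrightarrow> \<exists>m\<in>AS. (\<forall>j. m (Xmsg j) = 0) \<and> f m = w"
proof -
  assume Y: "Y \<noteq> {}" and w: "w \<in> bvecs l"
  define TT where "TT = {f m | m. m \<in> AS \<and> (\<forall>j. m (Xmsg j) = 0)}"
  have sTT: "fv.subspace TT"
    unfolding fv.subspace_def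
  proof (intro conjI ballI allI)
    show "0 \<in> TT" unfolding TT_def using A_zero f_zero by force
  next
    fix x y assume "x \<in> TT" "y \<in> TT"
    then obtain m1 m2 where "m1 \<in> AS" "\<forall>j. m1 (Xmsg j) = 0" "x = f m1"
      "m2 \<in> AS" "\<forall>j. m2 (Xmsg j) = 0" "y = f m2" unfolding TT_def by blast
    then show "x + y \<in> TT" unfolding TT_def using A_add f_add
      by (intro CollectI exI[of _ "m1 + m2"]) auto
  next
    fix c x assume "x \<in> TT"
    then obtain m1 where "m1 \<in> AS" "\<forall>j. m1 (Xmsg j) = 0" "x = f m1" unfolding TT_def by blast
    then show "bscale c x \<in> TT" unfolding TT_def using A_scale f_scale
      by (intro CollectI exI[of _ "\<lambda>z. bscale c (m1 z)"]) (auto simp: bscale_def)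
  qed
  have "FF ` PP \<subseteq> TT"
  proof
    fix x assume "x \<in> FF ` PP"
    then obtain y t where yt: "y \<in> Y" "t < n" "x = f (uv y t)" unfolding FF_def by auto
    have "uv y t \<in> AS" using uv_AS Y_in_Z yt by blast
    moreover have "\<forall>j. uv y t (Xmsg j) = 0" using yt(1) X_notin_Y by (auto simp: uv_def fun_eq_iff)
    ultimately show "x \<in> TT" unfolding TT_def using yt(3) by blast
  qed
  then have "fv.span (FF ` PP) \<subseteq> TT" using sTT by (rule fv.span_minimal)
  then have "w \<in> TT" using bvecs_in_span_FF[OF Y] w by (meson subsetD)
  then show ?thesis unfolding TT_def by blast
qed

end

context icode begin

abbreviation "II \<equiv> {n..<Suc k * n}"
definition "xval m i = m (Xmsg (i div n)) (i mod n)"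

lemma II_props: "i \<in> II \<Longrightarrow> i div n \<in> {1..k} \<and> i mod n < n"
proof -
  assume i: "i \<in> II"
  have "n div n \<le> i div n" using i by (intro div_le_mono) simp
  then have "1 \<le> i div n" using npos by simp
  moreover have "i div n < Suc k" using i by (simp add: less_mult_imp_div_less)
  moreover have "i mod n < n" using npos by simp
  ultimately show ?thesis by auto
qed

lemma II_eq: "i \<in> II \<Longrightarrow> i' \<in> II \<Longrightarrow> i div n = i' div n \<Longrightarrow> i mod n = i' mod n \<Longrightarrow> i = i'"
  by (metis div_mult_mod_eq)

lemma II_mem: "j \<in> {1..k} \<Longrightarrow> s < n \<Longrightarrow> j * n + s \<in> II \<and> (j * n + s) div n = j \<and> (j * n + s) mod n = s"
proof -
  assume j: "j \<in> {1..k}" and s: "s < n"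
  have "(j * n + s) div n = j" using s by simp
  moreover have "(j * n + s) mod n = s" using s by simp
  moreover have "n \<le> j * n + s" using j by (simp add: trans_le_add1)
  moreover have "j * n + s < Suc k * n"
  proof -
    have "j * n + s < j * n + n" using s by simp
    also have "\<dots> = Suc j * n" by simp
    also have "\<dots> \<le> Suc k * n" using j by (intro mult_le_mono1) auto
    finally show ?thesis .
  qed
  ultimately show ?thesis by auto
qed

lemma II_Y: "i \<in> II \<Longrightarrow> Y \<noteq> {}"
proof -
  assume "i \<in> II"
  from II_props[OF this] have "i div n \<in> {1..k}" by blast
  then have "1 \<le> k" by simp
  then have "1 \<le> card Y" using k_le_Y by simp
  then show ?thesis by auto
qed

definition "Kx i = (SOME m. m \<in> KK \<and> (\<forall>j s. m (Xmsg j) s = (if j = i div n \<and> s = i mod n then 1 else 0)))"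

lemma Kx: "i \<in> II \<Longrightarrow> Kx i \<in> KK \<and> (\<forall>j s. Kx i (Xmsg j) s = (if j = i div n \<and> s = i mod n then 1 else 0))"
proof -
  assume i: "i \<in> II"
  define u where "u = uv (Xmsg (i div n)) (i mod n)"
  have uA: "u \<in> AS" unfolding u_def using II_props[OF i] Xmsg_in_Z uv_AS by auto
  obtain mY where mY: "mY \<in> AS" "\<forall>j. mY (Xmsg j) = 0" "f mY = f u"
    using surjY[OF II_Y[OF i] f_range[OF uA]] by blast
  have "u + mY \<in> KK" unfolding KK_def using A_add[OF uA mY(1)] f_add[OF uA mY(1)] mY(3) by simp
  moreover have "\<forall>j s. (u + mY) (Xmsg j) s = (if j = i div n \<and> s = i mod n then 1 else 0)"
    using mY(2) unfolding u_def uv_def by (auto simp: fun_eq_iff)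
  ultimately have "\<exists>m. m \<in> KK \<and> (\<forall>j s. m (Xmsg j) s = (if j = i div n \<and> s = i mod n then 1 else 0))"
    by blast
  then show ?thesis unfolding Kx_def by (rule someI_ex)
qed

definition "Dp w m = (\<Sum>i\<in>II. w i * xval m i)"
definition "row y s = (\<lambda>i. if i \<in> II then Kx i y s else 0)"
definition "UU = {w. \<forall>i. i \<notin> II \<longrightarrow> w i = 0}"

lemma xval_Kx: "i \<in> II \<Longrightarrow> i' \<in> II \<Longrightarrow> xval (Kx i) i' = (if i' = i then 1 else 0)"
proof -
  assume i: "i \<in> II" and i': "i' \<in> II"
  have "xval (Kx i) i' = (if i div n = i' div n \<and> i' mod n = i mod n then 1 else 0)"
    unfolding xval_def using Kx[OF i] by simp
  also have "\<dots> = (if i' = i then 1 else 0)" using II_eq[OF i i'] by auto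
  finally show ?thesis .
qed

lemma Xpart_sum:
  fixes m :: "msg \<Rightarrow> nat \<Rightarrow> bit"
  shows "(\<Sum>i\<in>II. xval m i * (if j = i div n \<and> s = i mod n then 1 else 0)) =
   (if j \<in> {1..k} \<and> s < n then m (Xmsg j) s else 0)"
proof (cases "j \<in> {1..k} \<and> s < n")
  case True
  define i0 where "i0 = j * n + s"
  have i0all: "i0 \<in> II \<and> i0 div n = j \<and> i0 mod n = s" unfolding i0_def
    using II_mem[of j s] True by blast
  then have i0: "i0 \<in> II" "i0 div n = j" "i0 mod n = s" by blast+
  have iff: "(j = i div n \<and> s = i mod n) \<longleftrightarrow> i = i0" if i: "i \<in> II" for i
  proof
    assume h: "j = i div n \<and> s = i mod n"
    have "i div n = i0 div n" "i mod n = i0 mod n" using h i0 by simp_all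
    then show "i = i0" by (rule II_eq[OF i i0(1)])
  next
    assume "i = i0" then show "j = i div n \<and> s = i mod n" using i0 by simp
  qed
  have "(\<Sum>i\<in>II. xval m i * (if j = i div n \<and> s = i mod n then 1 else 0)) =
        (\<Sum>i\<in>II. (if i = i0 then xval m i else 0))"
  proof (rule sum.cong[OF refl])
    fix i assume i: "i \<in> II"
    show "xval m i * (if j = i div n \<and> s = i mod n then 1 else 0) = (if i = i0 then xval m i else 0)"
    proof (cases "i = i0")
      case True
      then have c: "j = i div n \<and> s = i mod n" using iff[OF i] by blast
      have "(if j = i div n \<and> s = i mod n then (1::bit) else 0) = 1" using c by (rule if_P)
      then show ?thesis using True by simp
    next
      case False
      then have c: "\<not> (j = i div n \<and> s = i mod n)" using iff[OF i] by blast
      have "(if j = i div n \<and> s = i mod n then (1::bit) else 0) = 0" using c by (rule if_not_P)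
      then show ?thesis using False by simp
    qed
  qed
  also have "\<dots> = xval m i0" using i0(1) by (simp add: sum.delta')
  finally show ?thesis using True i0 unfolding xval_def by simp
next
  case False
  have "(\<Sum>i\<in>II. xval m i * (if j = i div n \<and> s = i mod n then 1 else 0)) = (\<Sum>i\<in>II. 0)"
  proof (rule sum.cong[OF refl])
    fix i assume i: "i \<in> II"
    have "\<not> (j = i div n \<and> s = i mod n)" using II_props[OF i] False by auto
    then show "xval m i * (if j = i div n \<and> s = i mod n then 1 else 0) = 0"
      by (simp only: if_not_P if_False mult_zero_right)
  qed
  also have "\<dots> = 0" by (rule sum.neutral_const)
  finally show ?thesis by (simp only: if_not_P[OF False])
qed

lemma step3: "m \<in> KK \<Longrightarrow> y \<in> Y \<Longrightarrow> m y s = Dp (row y s) m"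
proof -
  assume m: "m \<in> KK" and y: "y \<in> Y"
  define m' where "m' = (\<Sum>i\<in>II. (\<lambda>z. bscale (xval m i) (Kx i z)))"
  have KA: "Kx i \<in> AS" "f (Kx i) = 0" if i: "i \<in> II" for i
    using conjunct1[OF Kx[OF i]] unfolding KK_def by blast+
  have M: "(\<lambda>z. bscale (xval m i) (Kx i z)) \<in> AS" if i: "i \<in> II" for i
    using KA(1)[OF i] by (rule A_scale)
  have fM: "f (\<lambda>z. bscale (xval m i) (Kx i z)) = 0" if i: "i \<in> II" for i
    using f_scale[OF KA(1)[OF i]] KA(2)[OF i] by (simp add: bscale_def fun_eq_iff)
  have m'K: "m' \<in> KK"
    using A_sum[of II, OF _ M] fM unfolding m'_def KK_def by simp
  have m'val: "m' z s' = (\<Sum>i\<in>II. xval m i * Kx i z s')" for z s'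
    unfolding m'_def sum_app bscale_def by simp
  have mmK: "m + m' \<in> KK" using KK_add[OF m m'K] .
  have X: "(m + m') (Xmsg j) = 0" for j
  proof
    fix s'
    have "m' (Xmsg j) s' = (\<Sum>i\<in>II. xval m i * (if j = i div n \<and> s' = i mod n then 1 else 0))"
      unfolding m'val
    proof (rule sum.cong[OF refl])
      fix i assume i: "i \<in> II"
      have "Kx i (Xmsg j) s' = (if j = i div n \<and> s' = i mod n then 1 else 0)"
        using conjunct2[OF Kx[OF i]] by blast
      then show "xval m i * Kx i (Xmsg j) s' = xval m i * (if j = i div n \<and> s' = i mod n then 1 else 0)"
        by (rule arg_cong)
    qed
    also have "\<dots> = (if j \<in> {1..k} \<and> s' < n then m (Xmsg j) s' else 0)" by (rule Xpart_sum)
    finally have "m' (Xmsg j) s' = (if j \<in> {1..k} \<and> s' < n then m (Xmsg j) s' else 0)" .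
    moreover have "\<not> (j \<in> {1..k} \<and> s' < n) \<Longrightarrow> m (Xmsg j) s' = 0"
    proof -
      assume "\<not> (j \<in> {1..k} \<and> s' < n)"
      then have "Xmsg j \<notin> Z \<or> n \<le> s'" unfolding Xmsg_in_Z by auto
      then show "m (Xmsg j) s' = 0" by (rule A_val[OF KK_AS[OF m]])
    qed
    ultimately show "(m + m') (Xmsg j) s' = (0::nat \<Rightarrow> bit) s'" by (cases "j \<in> {1..k} \<and> s' < n") auto
  qed
  have "(m + m') y = 0" using decode3[OF mmK X y] .
  then have "m y s + m' y s = 0" by (metis plus_fun_apply zero_fun_apply)
  then have "m y s = m' y s" by (cases "m y s"; cases "m' y s") auto
  also have "\<dots> = Dp (row y s) m" unfolding m'val Dp_def row_def by (intro sum.cong) auto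
  finally show ?thesis .
qed

lemma pairing_ok: "pairing Dp KK UU"
proof
  fix a b :: "nat \<Rightarrow> bit" and m assume "m \<in> KK"
  show "Dp (a + b) m = Dp a m + Dp b m"
    unfolding Dp_def by (simp add: distrib_right sum.distrib)
next
  fix c a and m :: "msg \<Rightarrow> nat \<Rightarrow> bit" assume "m \<in> KK"
  show "Dp (bscale c a) m = c * Dp a m"
    unfolding Dp_def bscale_def by (simp add: sum_distrib_left mult.assoc)
next
  fix m1 m2 assume "m1 \<in> KK" "m2 \<in> KK"
  then show "m1 + m2 \<in> KK" by (rule KK_add)
next
  fix a :: "nat \<Rightarrow> bit" and m1 m2 assume "m1 \<in> KK" "m2 \<in> KK"
  show "Dp a (m1 + m2) = Dp a m1 + Dp a m2"
    unfolding Dp_def xval_def by (simp add: distrib_left sum.distrib)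
next
  show "fv.subspace UU" unfolding fv.subspace_def UU_def bscale_def by auto
next
  fix w :: "nat \<Rightarrow> bit" assume w: "w \<in> UU" "w \<noteq> 0"
  then obtain i where i: "w i \<noteq> 0" by (auto simp: fun_eq_iff)
  then have iI: "i \<in> II" using w unfolding UU_def by blast
  have "Dp w (Kx i) = (\<Sum>i'\<in>II. (if i' = i then w i' else 0))"
    unfolding Dp_def using xval_Kx[OF iI] by (intro sum.cong) auto
  also have "\<dots> = w i" using iI by (simp add: sum.delta')
  finally show "\<exists>m\<in>KK. Dp w m \<noteq> 0" using Kx[OF iI] i by auto
qed

lemma row_UU: "row y s \<in> UU" unfolding row_def UU_def by auto

end

context icode begin

definition "Rows T = (\<lambda>(y, s). row y s) ` (T \<times> {..<n})"

lemma Rows_mono: "T \<subseteq> T' \<Longrightarrow> Rows T \<subseteq> Rows T'"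
  unfolding Rows_def by auto

lemma Rows_UU: "Rows T \<subseteq> UU"
  unfolding Rows_def using row_UU by auto

lemma finite_Rows: "finite T \<Longrightarrow> finite (Rows T)"
  unfolding Rows_def by auto

lemma row_in_Rows: "y \<in> T \<Longrightarrow> s < n \<Longrightarrow> row y s \<in> Rows T"
  unfolding Rows_def by auto

lemma Dp_ev: "i \<in> II \<Longrightarrow> Dp (ev i) m = xval m i"
proof -
  assume i: "i \<in> II"
  have "Dp (ev i) m = (\<Sum>i'\<in>II. (if i' = i then xval m i' else 0))"
    unfolding Dp_def ev_def by (intro sum.cong) auto
  also have "\<dots> = xval m i" using i by (simp add: sum.delta')
  finally show ?thesis .
qed

lemma Dp_sum:
  fixes m :: "msg \<Rightarrow> nat \<Rightarrow> bit" and F :: "'x \<Rightarrow> nat \<Rightarrow> bit"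
  shows "Dp (\<Sum>z\<in>G. F z) m = (\<Sum>z\<in>G. Dp (F z) m)"
  unfolding Dp_def sum_app by (simp add: sum_distrib_right) (rule sum.swap)

lemma eta_Ymsg: "y \<in> eta b S \<longleftrightarrow> (\<exists>l q. y = Ymsg l q \<and> l \<in> S \<and> q \<in> {1..b l})"
  unfolding eta_def by (auto simp: image_iff)

lemma vanish_on: "m \<in> KK \<Longrightarrow> G \<subseteq> Y \<Longrightarrow> (\<And>z s. z \<in> G \<Longrightarrow> s < n \<Longrightarrow> Dp (row z s) m = 0) \<Longrightarrow> z \<in> G \<Longrightarrow> m z = 0"
proof
  fix s assume m: "m \<in> KK" and G: "G \<subseteq> Y" and h: "\<And>z s. z \<in> G \<Longrightarrow> s < n \<Longrightarrow> Dp (row z s) m = 0"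
    and z: "z \<in> G"
  show "m z s = (0::nat \<Rightarrow> bit) s"
  proof (cases "s < n")
    case True then show ?thesis using step3[OF m, of z s] G z h[OF z True] by auto
  next
    case False then show ?thesis using A_val[OF KK_AS[OF m]] by simp
  qed
qed

lemma R1_span:
  assumes b: "b \<in> dpolymatroid r \<rho>" "(\<Sum>i\<in>{1..r}. b i) = k" and i: "i \<in> II"
  shows "ev i \<in> fv.span (Rows (eta b {1..r}))"
proof -
  define E where "E = eta b {1..r}"
  have EY: "E \<subseteq> Y" unfolding E_def using eta_sub_Y dp_le_single[OF R b(1)] by blast
  have fE: "finite E" unfolding E_def by (simp add: finite_eta)
  have evU: "ev i \<in> UU" unfolding UU_def ev_def using i by auto
  show ?thesis unfolding E_def[symmetric]
  proof (rule pairing.dual_span[OF pairing_ok finite_Rows[OF fE] Rows_UU evU])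
    fix m assume m: "m \<in> KK" and v: "\<forall>\<phi>\<in>Rows E. Dp \<phi> m = 0"
    have mz: "m z = 0" if z: "z \<in> E" for z
      using vanish_on[OF m EY _ z] v row_in_Rows by blast
    have si: "side_info (Knows E) m = 0" using mz by (auto simp: fun_eq_iff)
    have bb: "b \<in> basis_vectors r \<rho>" using basis_of_sum[OF b(1)] b(2) by simp
    define \<eta> where "\<eta> l = (\<lambda>q. Ymsg l q) ` {1..b l}" for l
    have Eeq: "E = (\<Union>l\<in>supp r b. \<eta> l)"
      unfolding E_def eta_def \<eta>_def supp_def by auto
    have "\<forall>l \<in> supp r b. \<eta> l \<subseteq> zeta \<rho> l \<and> card (\<eta> l) = b l"
    proof
      fix l assume l: "l \<in> supp r b"
      have "b l \<le> \<rho> {l}" using dp_le_single[OF R b(1)] l unfolding supp_def by auto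
      then show "\<eta> l \<subseteq> zeta \<rho> l \<and> card (\<eta> l) = b l"
        unfolding \<eta>_def zeta_def by (auto simp: card_image inj_on_def)
    qed
    moreover have "i div n \<in> {1..k}" using II_props[OF i] by blast
    ultimately have "(Xmsg (i div n), Knows E) \<in> S1 r \<rho> b"
      unfolding S1_def Eeq by blast
    then have "(Xmsg (i div n), Knows E) \<in> RR" using bb unfolding Rset_def R1_def by blast
    from decode[OF this m si] have "m (Xmsg (i div n)) = 0" .
    then show "Dp (ev i) m = 0" using Dp_ev[OF i] unfolding xval_def by simp
  qed
qed

end

context icode begin

lemma R2_span:
  assumes b: "b \<in> dpolymatroid r \<rho>" and S: "S \<subseteq> {1..r}" and bS: "(\<Sum>i\<in>S. b i) = \<rho> S"
    and j: "j \<in> S" and p: "p \<in> {1..\<rho> {j}}" and s': "s' < n"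
  shows "row (Ymsg j p) s' \<in> fv.span (Rows (eta b S))"
proof (cases "p \<le> b j")
  case True
  then have "Ymsg j p \<in> eta b S" using j p unfolding eta_Ymsg by auto
  then have "row (Ymsg j p) s' \<in> Rows (eta b S)" using s' by (rule row_in_Rows)
  then show ?thesis by (rule fv.span_base)
next
  case False
  have jr: "j \<in> {1..r}" using j S by auto
  define u where "u i = (if i \<in> S then b i else 0)" for i
  define w where "w = u(j := b j + 1)"
  have bnv: "b \<in> nvecs r" using dp_nvecs[OF b] .
  have bl: "\<And>i. i \<in> {1..r} \<Longrightarrow> b i \<le> \<rho> {i}" using dp_le_single[OF R b] by blast
  have unv: "u \<in> nvecs r" unfolding nvecs_def u_def using S by auto
  have uD: "u \<in> dpolymatroid r \<rho>" using dp_down[OF b unv] unfolding u_def by auto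
  have wnv: "w \<in> nvecs r" unfolding nvecs_def w_def u_def using S jr by auto
  have wle: "\<forall>i\<in>{1..r}. w i \<le> \<rho> {i}"
    unfolding w_def u_def using bl False p by auto
  have finS: "finite S" using S finite_subset by blast
  have "(\<Sum>i\<in>S. w i) = w j + (\<Sum>i\<in>S - {j}. w i)" using finS j by (simp add: sum.remove)
  also have "(\<Sum>i\<in>S - {j}. w i) = (\<Sum>i\<in>S - {j}. b i)" unfolding w_def u_def by (intro sum.cong) auto
  also have "w j = b j + 1" unfolding w_def by simp
  finally have "(\<Sum>i\<in>S. w i) = (\<Sum>i\<in>S. b i) + 1" using finS j by (simp add: sum.remove)
  then have "\<not> (\<Sum>i\<in>S. w i) \<le> \<rho> S" using bS by simp
  then have "w \<notin> dpolymatroid r \<rho>" using dpD[OF _ S, of w \<rho>] by linarith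
  then have wex: "w \<in> excluded_vectors r \<rho>" unfolding excluded_vectors_def using wnv wle by blast
  obtain c where c: "c \<in> min_excluded_vectors r \<rho>" "c \<le> w" using min_excluded_below[OF wex] by blast
  have cex: "c \<in> excluded_vectors r \<rho>" using c(1) unfolding min_excluded_vectors_def by blast
  have cnv: "c \<in> nvecs r" and cle: "\<forall>i\<in>{1..r}. c i \<le> \<rho> {i}" and cnD: "c \<notin> dpolymatroid r \<rho>"
    using cex unfolding excluded_vectors_def by auto
  have cw: "\<And>i. c i \<le> w i" using c(2) by (simp add: le_fun_def)
  have cj: "c j = b j + 1"
  proof (rule ccontr)
    assume "c j \<noteq> b j + 1"
    then have "c j \<le> b j" using cw[of j] unfolding w_def by simp
    then have cjb: "c j \<le> b j" .
    have cu: "c i \<le> u i" if i: "i \<in> {1..r}" for i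
    proof (cases "i = j")
      case True then show ?thesis using cjb j unfolding u_def by simp
    next
      case False then show ?thesis using cw[of i] unfolding w_def by simp
    qed
    from cu have "c \<in> dpolymatroid r \<rho>" by (rule dp_down[OF uD cnv])
    then show False using cnD by contradiction
  qed
  have jsupp: "j \<in> supp r c" unfolding supp_def using cj jr by auto
  have suppS: "supp r c \<subseteq> S"
  proof
    fix i assume "i \<in> supp r c"
    then have "0 < c i" unfolding supp_def by blast
    then have "0 < w i" using cw[of i] by linarith
    then show "i \<in> S" unfolding w_def u_def using j by (auto split: if_splits)
  qed
  have cb: "c i \<le> b i" if i: "i \<in> S - {j}" for i
    using cw[of i] i unfolding w_def u_def by simp
  define \<eta> where "\<eta> l = (\<lambda>q. Ymsg l q) ` {1..c l}" for l
  define G2 where "G2 = (\<lambda>q. Ymsg j q) ` {1..c j - 1}"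
  define G where "G = (\<Union>l\<in>supp r c - {j}. \<eta> l) \<union> G2"
  have "\<forall>l \<in> supp r c - {j}. \<eta> l \<subseteq> zeta \<rho> l \<and> card (\<eta> l) = c l"
  proof
    fix l assume l: "l \<in> supp r c - {j}"
    then have "c l \<le> \<rho> {l}" using cle suppS S by auto
    then show "\<eta> l \<subseteq> zeta \<rho> l \<and> card (\<eta> l) = c l"
      unfolding \<eta>_def zeta_def by (auto simp: card_image inj_on_def)
  qed
  moreover have "G2 \<subseteq> zeta \<rho> j - {Ymsg j p}" unfolding G2_def zeta_def using cj False bl[OF jr] by auto
  moreover have "card G2 = c j - 1" unfolding G2_def by (simp add: card_image inj_on_def)
  ultimately have "(Ymsg j p, KnowsSum G) \<in> S2 r \<rho> c j p" unfolding S2_def G_def by blast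
  then have recv: "(Ymsg j p, KnowsSum G) \<in> RR" unfolding Rset_def R2_def using c(1) jsupp p by blast
  have GS: "G \<subseteq> eta b S"
  proof
    fix z assume "z \<in> G"
    then consider (a) l q where "l \<in> supp r c - {j}" "z = Ymsg l q" "q \<in> {1..c l}"
      | (b) q where "z = Ymsg j q" "q \<in> {1..c j - 1}"
      unfolding G_def \<eta>_def G2_def by blast
    then show "z \<in> eta b S"
    proof cases
      case a then show ?thesis using cb[of l] suppS unfolding eta_def by fastforce
    next
      case b then show ?thesis using cj j unfolding eta_def by fastforce
    qed
  qed
  have GY: "G \<subseteq> Y" using GS eta_sub_Y[OF S] bl S by blast
  have finG: "finite G" using GS finite_eta[OF finS] finite_subset by blast
  define \<Phi> where "\<Phi> = (\<lambda>s. \<Sum>z\<in>G. row z s) ` {..<n}"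
  have \<Phi>U: "\<Phi> \<subseteq> UU" unfolding \<Phi>_def UU_def row_def sum_app by auto
  have \<Phi>fin: "finite \<Phi>" unfolding \<Phi>_def by simp
  have \<Phi>span: "\<Phi> \<subseteq> fv.span (Rows (eta b S))"
  proof
    fix x assume "x \<in> \<Phi>"
    then obtain s where s: "s < n" "x = (\<Sum>z\<in>G. row z s)" unfolding \<Phi>_def by blast
    have "(\<Sum>z\<in>G. row z s) \<in> fv.span (Rows (eta b S))"
    proof (rule fv.span_sum)
      fix z assume "z \<in> G"
      then have "row z s \<in> Rows (eta b S)" using GS s(1) row_in_Rows by blast
      then show "row z s \<in> fv.span (Rows (eta b S))" by (rule fv.span_base)
    qed
    then show "x \<in> fv.span (Rows (eta b S))" using s(2) by simp
  qed
  have "row (Ymsg j p) s' \<in> fv.span \<Phi>"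
  proof (rule pairing.dual_span[OF pairing_ok \<Phi>fin \<Phi>U row_UU])
    fix m assume m: "m \<in> KK" and v: "\<forall>\<phi>\<in>\<Phi>. Dp \<phi> m = 0"
    have sz: "(\<Sum>z\<in>G. m z) = 0"
    proof
      fix s
      show "(\<Sum>z\<in>G. m z) s = 0 s"
      proof (cases "s < n")
        case True
        have "(\<Sum>z\<in>G. m z) s = (\<Sum>z\<in>G. Dp (row z s) m)"
          unfolding sum_app using step3[OF m] GY by (intro sum.cong) auto
        also have "\<dots> = Dp (\<Sum>z\<in>G. row z s) m" by (simp add: Dp_sum)
        also have "\<dots> = 0" using v True unfolding \<Phi>_def by blast
        finally show ?thesis by simp
      next
        case False
        have "(\<Sum>z\<in>G. m z) s = (\<Sum>z\<in>G. (0::bit))"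
          unfolding sum_app using A_val[OF KK_AS[OF m]] False by (intro sum.cong) auto
        then show ?thesis by simp
      qed
    qed
    have "side_info (KnowsSum G) m = 0" using sz by (simp add: fun_eq_iff)
    from decode[OF recv m this] have "m (Ymsg j p) = 0" .
    moreover have "Ymsg j p \<in> Y" using jr p Ymsg_in_Y by blast
    ultimately show "Dp (row (Ymsg j p) s') m = 0" using step3[OF m, of "Ymsg j p" s'] by simp
  qed
  moreover have "fv.span \<Phi> \<subseteq> fv.span (Rows (eta b S))"
    using \<Phi>span fv.subspace_span by (rule fv.span_minimal)
  ultimately show ?thesis by (rule subsetD[rotated])
qed

end

lemma ev_inj: "ev i = ev j \<Longrightarrow> i = j"
proof -
  assume "ev i = ev j"
  then have "ev i i = ev j i" by simp
  then show "i = j" unfolding ev_def by (cases "i = j") auto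
qed

lemma inj_ev: "inj_on ev A"
  by (rule inj_onI) (rule ev_inj)

context icode begin

lemma ev_indep: "fv.independent (ev ` II)"
proof (rule fv.independent_if_scalars_zero)
  show "finite (ev ` II)" by simp
next
  fix g :: "(nat \<Rightarrow> bit) \<Rightarrow> bit" and x
  assume s: "(\<Sum>x\<in>ev ` II. bscale (g x) x) = 0" and x: "x \<in> ev ` II"
  obtain i0 where i0: "i0 \<in> II" "x = ev i0" using x by blast
  have inj: "inj_on ev II" by (rule inj_ev)
  have "(\<Sum>x\<in>ev ` II. bscale (g x) x) = (\<Sum>i\<in>II. bscale (g (ev i)) (ev i))"
    using inj by (rule sum.reindex[unfolded comp_def])
  then have "(\<Sum>i\<in>II. bscale (g (ev i)) (ev i)) i0 = 0" using s by simp
  moreover have "(\<Sum>i\<in>II. bscale (g (ev i)) (ev i)) i0 = (\<Sum>i\<in>II. (if i = i0 then g (ev i) else 0))"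
    unfolding sum_app bscale_def ev_def by (intro sum.cong) auto
  moreover have "\<dots> = g (ev i0)" using i0(1) by (simp add: sum.delta')
  ultimately show "g x = 0" using i0 by simp
qed

lemma card_ev: "card (ev ` II) = k * n"
proof -
  have inj: "inj_on ev II" by (rule inj_ev)
  then show ?thesis by (simp add: card_image)
qed

lemma Rows_E: "x \<in> Rows T \<Longrightarrow> \<exists>y s. y \<in> T \<and> s < n \<and> x = row y s"
  unfolding Rows_def by auto

lemma card_Rows_le: "finite T \<Longrightarrow> card (Rows T) \<le> card T * n"
  unfolding Rows_def using card_image_le[of "T \<times> {..<n}"] by (simp add: card_cartesian_product)

lemma dimS:
  assumes S: "S \<subseteq> {1..r}"
  shows "fv.dim (\<Union>i\<in>S. fv.span (Rows (zeta \<rho> i))) = n * \<rho> S"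
proof -
  obtain b where b: "b \<in> dpolymatroid r \<rho>" "(\<Sum>i\<in>S. b i) = \<rho> S" "(\<Sum>i\<in>{1..r}. b i) = k"
    using greedy[OF R S] by blast
  have bl: "\<And>i. i \<in> {1..r} \<Longrightarrow> b i \<le> \<rho> {i}" using dp_le_single[OF R b(1)] by blast
  define Eb where "Eb = eta b {1..r}"
  define ES where "ES = eta b S"
  have finEb: "finite Eb" unfolding Eb_def by (simp add: finite_eta)
  have cEb: "card Eb = k" unfolding Eb_def using card_eta[of "{1..r}" b] b(3) by simp
  have finS: "finite S" using S finite_subset by blast
  have cES: "card ES = \<rho> S" unfolding ES_def using card_eta[OF finS, of b] b(2) by simp
  have Esub: "ev ` II \<subseteq> fv.span (Rows Eb)" unfolding Eb_def using R1_span[OF b(1) b(3)] by blast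
  have cR: "card (Rows Eb) \<le> card (ev ` II)" using card_Rows_le[OF finEb] cEb card_ev by simp
  have iRb: "fv.independent (Rows Eb)" and cRb: "card (Rows Eb) = k * n"
    using indep_of_spanning[OF finite_Rows[OF finEb] ev_indep Esub cR] card_ev by auto
  have finP: "finite (Eb \<times> {..<n})" using finEb by simp
  have "card ((\<lambda>(y, s). row y s) ` (Eb \<times> {..<n})) = card (Eb \<times> {..<n})"
    using cRb cEb unfolding Rows_def by (simp add: card_cartesian_product)
  then have inj: "inj_on (\<lambda>(y, s). row y s) (Eb \<times> {..<n})" using finP by (rule eq_card_imp_inj_on[rotated])
  have ESb: "ES \<subseteq> Eb" unfolding ES_def Eb_def using S by (rule eta_mono)
  have iRS: "fv.independent (Rows ES)" using iRb Rows_mono[OF ESb] by (rule fv.independent_mono)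
  have injS: "inj_on (\<lambda>(y, s). row y s) (ES \<times> {..<n})" using inj by (rule inj_on_subset) (use ESb in auto)
  have cRS: "card (Rows ES) = \<rho> S * n"
    unfolding Rows_def using card_image[OF injS] cES by (simp add: card_cartesian_product)
  have A1: "Rows ES \<subseteq> (\<Union>i\<in>S. fv.span (Rows (zeta \<rho> i)))"
  proof
    fix x assume "x \<in> Rows ES"
    then obtain y s where ys: "y \<in> ES" "s < n" "x = row y s" using Rows_E by metis
    then obtain l q where lq: "y = Ymsg l q" "l \<in> S" "q \<in> {1..b l}" unfolding ES_def eta_Ymsg by blast
    have "b l \<le> \<rho> {l}" using bl[of l] lq(2) S by blast
    then have "y \<in> zeta \<rho> l" using lq unfolding zeta_def by auto
    then have "x \<in> Rows (zeta \<rho> l)" unfolding ys(3) using ys(2) by (rule row_in_Rows)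
    then have "x \<in> fv.span (Rows (zeta \<rho> l))" by (rule fv.span_base)
    then show "x \<in> (\<Union>i\<in>S. fv.span (Rows (zeta \<rho> i)))" by (rule UN_I[OF lq(2)])
  qed
  have A2: "(\<Union>i\<in>S. fv.span (Rows (zeta \<rho> i))) \<subseteq> fv.span (Rows ES)"
  proof (rule UN_least)
    fix i assume i: "i \<in> S"
    have "Rows (zeta \<rho> i) \<subseteq> fv.span (Rows ES)"
    proof
      fix x assume "x \<in> Rows (zeta \<rho> i)"
      then obtain y s where ys: "y \<in> zeta \<rho> i" "s < n" "x = row y s" using Rows_E by metis
      then obtain p where p: "y = Ymsg i p" "p \<in> {1..\<rho> {i}}" unfolding zeta_def by blast
      show "x \<in> fv.span (Rows ES)" unfolding ES_def ys(3) p(1)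
        by (rule R2_span[OF b(1) S b(2) i p(2) ys(2)])
    qed
    then show "fv.span (Rows (zeta \<rho> i)) \<subseteq> fv.span (Rows ES)"
      using fv.subspace_span by (rule fv.span_minimal)
  qed
  have "fv.dim (\<Union>i\<in>S. fv.span (Rows (zeta \<rho> i))) = fv.dim (Rows ES)" using A1 A2 by (rule dim_between)
  also have "\<dots> = card (Rows ES)" using iRS by (rule fv.dim_eq_card_independent)
  finally show ?thesis using cRS by simp
qed

lemma bvecs_subspace: "fv.subspace (bvecs N)"
  unfolding fv.subspace_def bvecs_def bscale_def by auto

lemma repr: "representable_F2 r (\<lambda>S. n * \<rho> S)"
  unfolding representable_F2_def
proof (intro exI conjI ballI allI impI)
  fix i
  show "fv.subspace (fv.span (Rows (zeta \<rho> i)))" by (rule fv.subspace_span)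
  have "Rows (zeta \<rho> i) \<subseteq> bvecs (Suc k * n)"
    unfolding Rows_def row_def bvecs_def by auto
  then show "fv.span (Rows (zeta \<rho> i)) \<subseteq> bvecs (Suc k * n)"
    using bvecs_subspace by (rule fv.span_minimal)
next
  fix S :: "nat set" assume "S \<subseteq> {1..r}"
  then show "fv.dim (\<Union>i\<in>S. fv.span (Rows (zeta \<rho> i))) = n * \<rho> S" by (rule dimS)
qed

end

theorem theorem2:
  fixes r n :: nat and \<rho> :: "nat set \<Rightarrow> nat"
  assumes "is_rank_function r \<rho>"
    and "n > 0"
    and "has_perfect_linear_solution n (Zset r \<rho>) (Rset r \<rho>)"
  shows "representable_F2 r (\<lambda>S. n * \<rho> S)"
proof -
  obtain l f where lf: "is_index_code n (Zset r \<rho>) (Rset r \<rho>) l f" "is_linear_code n (Zset r \<rho>) f"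
    "real l / real n = real (mu (Rset r \<rho>))"
    using assms(3) unfolding has_perfect_linear_solution_def by blast
  interpret icode r n \<rho> l f using assms(1,2) lf by unfold_locales
  show ?thesis by (rule repr)
qed

end
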